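(* Let $q\in[0,1)$, $\beta>0$, and $s_0,s_1\in(-1,0)$ with $|s_0|>|s_1|$. Fix integers $x_1(0)>x_2(0)$. Let $\mathbf{x}(t)=(x_1(t),x_2(t))$ be the two-particle system with parameters $(s_0,s_1)$ started from $(x_1(0),x_2(0))$. Let $y_1'(0)$, with $x_2(0)<y_1'(0)\le x_1(0)$, be random with distribution $$\mathbb{P}(y_1'(0)=y)=\varphi_{q,s_1^2/s_0^2,\,s_1^2}\bigl(y-x_2(0)-1\mid x_1(0)-x_2(0)-1\bigr),$$ and let $\mathbf{y}(t)=(y_1(t),y_2(t))$ be the two-particle system with parameters $(s_1,s_0)$ started from $(y_1'(0),x_2(0))$. Then the trajectories of the second particle, $\{x_2(t)\}_{t\in\mathbb{Z}_{\ge0}}$ and $\{y_2(t)\}_{t\in\mathbb{Z}_{\ge0}}$, have the same distribution.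
   Context: $(a;q)_k=\prod_{i=0}^{k-1}(1-aq^i)$. For $0\le j\le m$: $\varphi_{q,\mu,\nu}(j\mid m)=\mu^j\frac{(\nu/\mu;q)_j(\mu;q)_{m-j}}{(\nu;q)_m}\frac{(q;q)_m}{(q;q)_j(q;q)_{m-j}}$, where $\mu^j(\nu/\mu;q)_j$ means $\prod_{i=0}^{j-1}(\mu-\nu q^i)$. Two-particle system with parameters $(\sigma_1,\sigma_2)$ (with $\sigma_i\in(-1,0)$, and $\beta$, $q$ fixed): a discrete-time Markov chain on pairs of integers $x_1(t)>x_2(t)$. At each step, first $x_1$ jumps right by $h_0\in\{0,1\}$ with $\mathbb{P}(h_0=1)=\frac{\beta\sigma_1^2}{1+\beta\sigma_1^2}$. Then, with $g=x_1(t)-x_2(t)-1$, the particle $x_2$ jumps right by $h_1\in\{0,1\}$ with $\mathbb{P}(h_1=1\mid h_0=0)=\frac{\beta\sigma_2^2(1-q^g)}{1+\beta\sigma_2^2}$ and $\mathbb{P}(h_1=1\mid h_0=1)=\frac{\beta\sigma_2^2+q^g\sigma_2^2}{1+\beta\sigma_2^2}$ (with $0^0=1$). *)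

theory Defs
  imports "HOL-Probability.Probability"
begin

definition qpoch :: "real \<Rightarrow> real \<Rightarrow> nat \<Rightarrow> real" where
  "qpoch a q k = (\<Prod>i<k. 1 - a * q ^ i)"

text \<open>phi_{q,mu,nu}(j | m), where mu^j (nu/mu;q)_j is read as prod_{i<j} (mu - nu q^i).\<close>
definition phi :: "real \<Rightarrow> real \<Rightarrow> real \<Rightarrow> nat \<Rightarrow> nat \<Rightarrow> real" where
  "phi q \<mu> \<nu> j m =
     (\<Prod>i<j. \<mu> - \<nu> * q ^ i) * qpoch \<mu> q (m - j) / qpoch \<nu> q m
     * (qpoch q q m / (qpoch q q j * qpoch q q (m - j)))"

definition step :: "real \<Rightarrow> real \<Rightarrow> real \<Rightarrow> real \<Rightarrow> int \<times> int \<Rightarrow> (int \<times> int) pmf" where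
  "step \<beta> q \<sigma>1 \<sigma>2 s =
     (let x1 = fst s; x2 = snd s; g = nat (x1 - x2 - 1) in
      bind_pmf (bernoulli_pmf (\<beta> * \<sigma>1\<^sup>2 / (1 + \<beta> * \<sigma>1\<^sup>2))) (\<lambda>h0.
      bind_pmf (bernoulli_pmf
                 (if h0 then (\<beta> * \<sigma>2\<^sup>2 + q ^ g * \<sigma>2\<^sup>2) / (1 + \<beta> * \<sigma>2\<^sup>2)
                  else \<beta> * \<sigma>2\<^sup>2 * (1 - q ^ g) / (1 + \<beta> * \<sigma>2\<^sup>2))) (\<lambda>h1.
      return_pmf (x1 + of_bool h0, x2 + of_bool h1))))"

fun traj :: "real \<Rightarrow> real \<Rightarrow> real \<Rightarrow> real \<Rightarrow> nat \<Rightarrow> int \<times> int \<Rightarrow> (int \<times> int) list pmf" where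
  "traj \<beta> q \<sigma>1 \<sigma>2 0 s = return_pmf [s]"
| "traj \<beta> q \<sigma>1 \<sigma>2 (Suc n) s =
     bind_pmf (step \<beta> q \<sigma>1 \<sigma>2 s) (\<lambda>s'. map_pmf (Cons s) (traj \<beta> q \<sigma>1 \<sigma>2 n s'))"

end

theory Submission
  imports Defs
begin

lemma qpoch_Suc: "qpoch a q (Suc k) = qpoch a q k * (1 - a * q^k)"
  by (simp add: qpoch_def)

lemma qpoch_0[simp]: "qpoch a q 0 = 1" by (simp add: qpoch_def)

lemma mult_pow_lt1: "0 \<le> q \<Longrightarrow> q \<le> 1 \<Longrightarrow> (a::real) < 1 \<Longrightarrow> a * q^k < 1"
proof (cases "a \<le> 0")
  case True
  assume "0 \<le> q" "q \<le> 1" "a < 1"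
  then show ?thesis using True by (smt (verit) mult_nonpos_nonneg zero_le_power)
next
  case False
  assume a: "0 \<le> q" "q \<le> 1" "a < 1"
  have "q^k \<le> 1" using a by (simp add: power_le_one)
  then have "a * q^k \<le> a" using False by (simp add: mult_left_le)
  then show ?thesis using a by linarith
qed

lemma qpoch_pos: "0 \<le> q \<Longrightarrow> q \<le> 1 \<Longrightarrow> a < 1 \<Longrightarrow> qpoch a q k > 0"
  by (induction k) (auto simp: qpoch_Suc mult_pow_lt1)

lemma RA:
  assumes "0 \<le> q" "q < 1" "\<nu> < 1"
  shows "phi q \<mu> \<nu> (Suc j) (Suc (j + n)) = phi q \<mu> \<nu> j (j + n) *
    ((\<mu> - \<nu> * q^j) * (1 - q * q^j * q^n) / ((1 - \<nu> * (q^j * q^n)) * (1 - q * q^j)))"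
proof -
  have a: "qpoch q q k > 0" "qpoch \<nu> q k > 0" for k using assms by (auto intro: qpoch_pos)
  have b: "1 - q * q^j > 0" "1 - \<nu> * (q^j * q^n) > 0"
    using mult_pow_lt1[of q q j] mult_pow_lt1[of q \<nu> "j+n"] assms by (auto simp: power_add)
  show ?thesis unfolding phi_def using a[of j] a[of "j+n"] a[of n] b
    by (simp add: qpoch_Suc prod.lessThan_Suc power_add field_simps)
qed

lemma RB:
  assumes "0 \<le> q" "q < 1" "\<nu> < 1"
  shows "phi q \<mu> \<nu> j (Suc (j + n)) = phi q \<mu> \<nu> j (j + n) *
    ((1 - \<mu> * q^n) * (1 - q * q^j * q^n) / ((1 - \<nu> * (q^j * q^n)) * (1 - q * q^n)))"
proof -
  have a: "qpoch q q k > 0" "qpoch \<nu> q k > 0" for k using assms by (auto intro: qpoch_pos)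
  have b: "1 - q * q^n > 0" "1 - \<nu> * (q^j * q^n) > 0"
    using mult_pow_lt1[of q q n] mult_pow_lt1[of q \<nu> "j+n"] assms by (auto simp: power_add)
  have c: "Suc (j + n) - j = Suc n" "j + n - j = n" by auto
  show ?thesis unfolding phi_def c using a[of j] a[of "j+n"] a[of n] b
    by (simp add: qpoch_Suc prod.lessThan_Suc power_add field_simps)
qed

definition Pr :: "real \<Rightarrow> real \<Rightarrow> real \<Rightarrow> real \<Rightarrow> bool \<Rightarrow> bool \<Rightarrow> real" where
 "Pr \<beta> \<sigma>1 \<sigma>2 t h0 h1 =
   (if h0 then \<beta> * \<sigma>1^2 / (1 + \<beta> * \<sigma>1^2) else 1 - \<beta> * \<sigma>1^2 / (1 + \<beta> * \<sigma>1^2)) *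
   (if h0 then (if h1 then (\<beta> * \<sigma>2^2 + t * \<sigma>2^2) / (1 + \<beta> * \<sigma>2^2) else 1 - (\<beta> * \<sigma>2^2 + t * \<sigma>2^2) / (1 + \<beta> * \<sigma>2^2))
    else (if h1 then \<beta> * \<sigma>2^2 * (1 - t) / (1 + \<beta> * \<sigma>2^2) else 1 - \<beta> * \<sigma>2^2 * (1 - t) / (1 + \<beta> * \<sigma>2^2)))"

lemma core0_int:
  fixes \<beta> s0 s1 q u w K f1 f2 f3 :: real
  assumes nz: "s0 \<noteq> 0" "1 + \<beta> * s0^2 \<noteq> 0" "1 + \<beta> * s1^2 \<noteq> 0" "1 - q * u \<noteq> 0" "1 - q * w \<noteq> 0"
     "1 - s1^2 * (u * w) \<noteq> 0" "1 - s1^2 * (q * u * w) \<noteq> 0"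
  and f1: "f1 = K * ((s1^2 / s0^2 - s1^2 * u) * (1 - q * u * w) / ((1 - s1^2 * (u * w)) * (1 - q * u)))"
  and f3: "f3 = K * ((1 - s1^2 / s0^2 * w) * (1 - q * u * w) / ((1 - s1^2 * (u * w)) * (1 - q * w)))"
  and f2: "f2 = f1 * ((1 - s1^2 / s0^2 * w) * (1 - q * (q * u) * w) / ((1 - s1^2 * (q * u * w)) * (1 - q * w)))"
  shows "Pr \<beta> s0 s1 (q * u * w) False False * f1 + Pr \<beta> s0 s1 (q * u * w) True False * f2
       = Pr \<beta> s1 s0 (q * u) False False * f1 + Pr \<beta> s1 s0 u True False * f3"
proof -
  define i0 where "i0 = 1 / (1 + \<beta> * s0^2)"
  define i1 where "i1 = 1 / (1 + \<beta> * s1^2)"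
  define ia where "ia = 1 / s0^2"
  define iu where "iu = 1 / (1 - q * u)"
  define iw where "iw = 1 / (1 - q * w)"
  define iv where "iv = 1 / (1 - s1^2 * (u * w))"
  define iv2 where "iv2 = 1 / (1 - s1^2 * (q * u * w))"
  have h: "(1 + \<beta> * s0^2) * i0 = 1" "(1 + \<beta> * s1^2) * i1 = 1" "s0^2 * ia = 1" "(1 - q * u) * iu = 1"
    "(1 - q * w) * iw = 1" "(1 - s1^2 * (u * w)) * iv = 1" "(1 - s1^2 * (q * u * w)) * iv2 = 1"
    using nz by (auto simp: i0_def i1_def ia_def iu_def iw_def iv_def iv2_def)
  have e: "\<And>x. x / (1 + \<beta> * s0^2) = x * i0" "\<And>x. x / (1 + \<beta> * s1^2) = x * i1" "\<And>x. x / s0^2 = x * ia"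
    "\<And>x. x / ((1 - s1^2 * (u * w)) * (1 - q * u)) = x * iv * iu"
    "\<And>x. x / ((1 - s1^2 * (u * w)) * (1 - q * w)) = x * iv * iw"
    "\<And>x. x / ((1 - s1^2 * (q * u * w)) * (1 - q * w)) = x * iv2 * iw"
    by (simp_all add: i0_def i1_def ia_def iu_def iw_def iv_def iv2_def)
  show ?thesis unfolding Pr_def f2 f1 f3 if_True if_False e using h by algebra
qed

lemma core1_int:
  fixes \<beta> s0 s1 q u w K f1 f3 :: real
  assumes nz: "s0 \<noteq> 0" "1 + \<beta> * s0^2 \<noteq> 0" "1 + \<beta> * s1^2 \<noteq> 0" "1 - q * u \<noteq> 0" "1 - q * w \<noteq> 0"
     "1 - s1^2 * (u * w) \<noteq> 0"
  and f1: "f1 = K * ((s1^2 / s0^2 - s1^2 * u) * (1 - q * u * w) / ((1 - s1^2 * (u * w)) * (1 - q * u)))"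
  and f3: "f3 = K * ((1 - s1^2 / s0^2 * w) * (1 - q * u * w) / ((1 - s1^2 * (u * w)) * (1 - q * w)))"
  shows "Pr \<beta> s0 s1 (q * u * w) False True * K + Pr \<beta> s0 s1 (q * u * w) True True * f3
       = Pr \<beta> s1 s0 (q * u) False True * f1 + Pr \<beta> s1 s0 u True True * f3"
proof -
  define i0 where "i0 = 1 / (1 + \<beta> * s0^2)"
  define i1 where "i1 = 1 / (1 + \<beta> * s1^2)"
  define ia where "ia = 1 / s0^2"
  define iu where "iu = 1 / (1 - q * u)"
  define iw where "iw = 1 / (1 - q * w)"
  define iv where "iv = 1 / (1 - s1^2 * (u * w))"
  have h: "(1 + \<beta> * s0^2) * i0 = 1" "(1 + \<beta> * s1^2) * i1 = 1" "s0^2 * ia = 1" "(1 - q * u) * iu = 1"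
    "(1 - q * w) * iw = 1" "(1 - s1^2 * (u * w)) * iv = 1"
    using nz by (auto simp: i0_def i1_def ia_def iu_def iw_def iv_def)
  have e: "\<And>x. x / (1 + \<beta> * s0^2) = x * i0" "\<And>x. x / (1 + \<beta> * s1^2) = x * i1" "\<And>x. x / s0^2 = x * ia"
    "\<And>x. x / ((1 - s1^2 * (u * w)) * (1 - q * u)) = x * iv * iu"
    "\<And>x. x / ((1 - s1^2 * (u * w)) * (1 - q * w)) = x * iv * iw"
    by (simp_all add: i0_def i1_def ia_def iu_def iw_def iv_def)
  show ?thesis unfolding Pr_def f1 f3 if_True if_False e using h by algebra
qed

lemma core0_zero:
  fixes \<beta> s0 s1 q w g0 g1 :: real
  assumes nz: "s0 \<noteq> 0" "1 + \<beta> * s0^2 \<noteq> 0" "1 + \<beta> * s1^2 \<noteq> 0" "1 - q * w \<noteq> 0" "1 - s1^2 * w \<noteq> 0"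
  and g1: "g1 = g0 * ((1 - s1^2 / s0^2 * w) * (1 - q * w) / ((1 - s1^2 * w) * (1 - q * w)))"
  shows "Pr \<beta> s0 s1 w False False * g0 + Pr \<beta> s0 s1 w True False * g1 = Pr \<beta> s1 s0 1 False False * g0"
proof -
  define i0 where "i0 = 1 / (1 + \<beta> * s0^2)"
  define i1 where "i1 = 1 / (1 + \<beta> * s1^2)"
  define ia where "ia = 1 / s0^2"
  define iw where "iw = 1 / (1 - q * w)"
  define iv where "iv = 1 / (1 - s1^2 * w)"
  have h: "(1 + \<beta> * s0^2) * i0 = 1" "(1 + \<beta> * s1^2) * i1 = 1" "s0^2 * ia = 1"
    "(1 - q * w) * iw = 1" "(1 - s1^2 * w) * iv = 1"
    using nz by (auto simp: i0_def i1_def ia_def iw_def iv_def)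
  have e: "\<And>x. x / (1 + \<beta> * s0^2) = x * i0" "\<And>x. x / (1 + \<beta> * s1^2) = x * i1" "\<And>x. x / s0^2 = x * ia"
    "\<And>x. x / ((1 - s1^2 * w) * (1 - q * w)) = x * iv * iw"
    by (simp_all add: i0_def i1_def ia_def iw_def iv_def)
  show ?thesis unfolding Pr_def g1 if_True if_False e using h by algebra
qed

lemma core0_top:
  fixes \<beta> s0 s1 q u h0 h1 :: real
  assumes nz: "s0 \<noteq> 0" "1 + \<beta> * s0^2 \<noteq> 0" "1 + \<beta> * s1^2 \<noteq> 0" "1 - q * u \<noteq> 0" "1 - s1^2 * u \<noteq> 0"
  and h1: "h1 = h0 * ((s1^2 / s0^2 - s1^2 * u) * (1 - q * u) / ((1 - s1^2 * u) * (1 - q * u)))"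
  shows "Pr \<beta> s0 s1 u True False * h1 = h0 * Pr \<beta> s1 s0 u True False"
proof -
  define i0 where "i0 = 1 / (1 + \<beta> * s0^2)"
  define i1 where "i1 = 1 / (1 + \<beta> * s1^2)"
  define ia where "ia = 1 / s0^2"
  define iu where "iu = 1 / (1 - q * u)"
  define iv where "iv = 1 / (1 - s1^2 * u)"
  have h: "(1 + \<beta> * s0^2) * i0 = 1" "(1 + \<beta> * s1^2) * i1 = 1" "s0^2 * ia = 1"
    "(1 - q * u) * iu = 1" "(1 - s1^2 * u) * iv = 1"
    using nz by (auto simp: i0_def i1_def ia_def iu_def iv_def)
  have e: "\<And>x. x / (1 + \<beta> * s0^2) = x * i0" "\<And>x. x / (1 + \<beta> * s1^2) = x * i1" "\<And>x. x / s0^2 = x * ia"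
    "\<And>x. x / ((1 - s1^2 * u) * (1 - q * u)) = x * iv * iu"
    by (simp_all add: i0_def i1_def iu_def ia_def iv_def)
  show ?thesis unfolding Pr_def h1 if_True if_False e using h by algebra
qed

lemma core1_top:
  fixes \<beta> s0 s1 u :: real
  assumes nz: "1 + \<beta> * s0^2 \<noteq> 0" "1 + \<beta> * s1^2 \<noteq> 0"
  shows "Pr \<beta> s0 s1 u True True * h = h * Pr \<beta> s1 s0 u True True"
  using nz unfolding Pr_def by (simp add: field_simps)



lemma shift_sum:
  fixes h :: "int \<Rightarrow> real"
  assumes "0 \<le> e" "M + e \<le> N" "\<And>k. k < 0 \<or> k > M \<Longrightarrow> h k = 0"
  shows "(\<Sum>k\<in>{0..M}. h k) = (\<Sum>k\<in>{0..N}. h (k - e))"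
proof -
  have "(\<Sum>k\<in>{0..M}. h k) = (\<Sum>k\<in>{e..M+e}. h (k - e))"
    by (rule sum.reindex_bij_witness[where i="\<lambda>k. k - e" and j="\<lambda>k. k + e"]) auto
  also have "\<dots> = (\<Sum>k\<in>{0..N}. h (k - e))"
    by (rule sum.mono_neutral_left) (use assms in auto)
  finally show ?thesis .
qed

lemma Pr_sum: "1 + \<beta> * \<sigma>2^2 \<noteq> 0 \<Longrightarrow> 1 + \<beta> * \<sigma>1^2 \<noteq> 0 \<Longrightarrow>
  Pr \<beta> \<sigma>1 \<sigma>2 t False False + Pr \<beta> \<sigma>1 \<sigma>2 t False True + Pr \<beta> \<sigma>1 \<sigma>2 t True False + Pr \<beta> \<sigma>1 \<sigma>2 t True True = 1"
  unfolding Pr_def by (simp only: if_True if_False) algebra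

lemma pmf_bind_step:
  assumes q0: "0 \<le> q" and q1: "q \<le> 1" and b: "\<beta> > 0" and s1: "\<sigma>1^2 < 1" and s2: "\<sigma>2^2 < 1"
  shows "pmf (bind_pmf (step \<beta> q \<sigma>1 \<sigma>2 (x1, x2)) f) p =
      Pr \<beta> \<sigma>1 \<sigma>2 (q ^ nat (x1 - x2 - 1)) False False * pmf (f (x1, x2)) p
    + Pr \<beta> \<sigma>1 \<sigma>2 (q ^ nat (x1 - x2 - 1)) False True * pmf (f (x1, x2 + 1)) p
    + Pr \<beta> \<sigma>1 \<sigma>2 (q ^ nat (x1 - x2 - 1)) True False * pmf (f (x1 + 1, x2)) p
    + Pr \<beta> \<sigma>1 \<sigma>2 (q ^ nat (x1 - x2 - 1)) True True * pmf (f (x1 + 1, x2 + 1)) p"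
proof -
  define t where "t = q ^ nat (x1 - x2 - 1)"
  have t: "0 \<le> t" "t \<le> 1" using q0 q1 by (auto simp: t_def power_le_one)
  have d1: "1 + \<beta> * \<sigma>1^2 > 0" "1 + \<beta> * \<sigma>2^2 > 0" using b by (auto intro: add_pos_nonneg)
  have p0: "0 \<le> \<beta> * \<sigma>1^2 / (1 + \<beta> * \<sigma>1^2)" "\<beta> * \<sigma>1^2 / (1 + \<beta> * \<sigma>1^2) \<le> 1"
    using d1 b by (auto simp: field_simps)
  have tt: "t * \<sigma>2^2 \<le> 1" using t s2 by (metis less_eq_real_def mult_le_one zero_le_power2)
  have p1: "0 \<le> (\<beta> * \<sigma>2^2 + t * \<sigma>2^2) / (1 + \<beta> * \<sigma>2^2)" "(\<beta> * \<sigma>2^2 + t * \<sigma>2^2) / (1 + \<beta> * \<sigma>2^2) \<le> 1"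
    using d1 b t tt mult_left_le_one_le[of "\<sigma>2^2" t] by (auto simp: field_simps)
  have p2: "0 \<le> \<beta> * \<sigma>2^2 * (1 - t) / (1 + \<beta> * \<sigma>2^2)" "\<beta> * \<sigma>2^2 * (1 - t) / (1 + \<beta> * \<sigma>2^2) \<le> 1"
    using d1 b t mult_left_le_one_le[of "\<sigma>2^2" t] by (auto simp: field_simps intro!: mult_nonneg_nonneg)
  define a where "a = \<beta> * \<sigma>1^2 / (1 + \<beta> * \<sigma>1^2)"
  define r1 where "r1 = (\<beta> * \<sigma>2^2 + t * \<sigma>2^2) / (1 + \<beta> * \<sigma>2^2)"
  define r0 where "r0 = \<beta> * \<sigma>2^2 * (1 - t) / (1 + \<beta> * \<sigma>2^2)"
  have pr: "Pr \<beta> \<sigma>1 \<sigma>2 t h0 h1 = (if h0 then a else 1 - a) * (if h0 then (if h1 then r1 else 1 - r1) else (if h1 then r0 else 1 - r0))" for h0 h1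
    unfolding Pr_def a_def r1_def r0_def ..
  show ?thesis
    unfolding step_def Let_def fst_conv snd_conv t_def[symmetric] pr
    unfolding a_def[symmetric] r1_def[symmetric] r0_def[symmetric]
    using p0 p1 p2 unfolding a_def[symmetric] r1_def[symmetric] r0_def[symmetric]
    by (simp add: bind_assoc_pmf bind_return_pmf pmf_bind algebra_simps)
qed

lemma pmf_map_Cons: "pmf (map_pmf (Cons c) M) (d # p) = (if d = c then pmf M p else 0)"
  "pmf (map_pmf (Cons c) M) [] = 0"
proof -
  show "pmf (map_pmf (Cons c) M) (d # p) = (if d = c then pmf M p else 0)"
  proof (cases "d = c")
    case True then show ?thesis by (simp add: pmf_map_inj' inj_on_def)
  next
    case False then show ?thesis by (subst pmf_map_outside) auto
  qed
  show "pmf (map_pmf (Cons c) M) [] = 0" by (subst pmf_map_outside) auto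
qed

lemma traj_snd: "map_pmf (map snd) (traj \<beta> q \<sigma>1 \<sigma>2 (Suc T) s) =
   bind_pmf (step \<beta> q \<sigma>1 \<sigma>2 s) (\<lambda>s'. map_pmf (Cons (snd s)) (map_pmf (map snd) (traj \<beta> q \<sigma>1 \<sigma>2 T s')))"
  by (simp add: map_bind_pmf map_pmf_comp)

context
  fixes q \<beta> s0 s1 :: real
  assumes q0: "0 \<le> q" and q1: "q < 1" and bpos: "\<beta> > 0" and s0nz: "s0 \<noteq> 0"
    and s0l: "s0^2 < 1" and s1l: "s1^2 < 1"
begin

definition ph :: "int \<Rightarrow> int \<Rightarrow> real" where
  "ph k m = (if 0 \<le> k \<and> k \<le> m then phi q (s1^2 / s0^2) (s1^2) (nat k) (nat m) else 0)"

lemma nzs: "1 + \<beta> * s0^2 \<noteq> 0" "1 + \<beta> * s1^2 \<noteq> 0"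
  using bpos by (smt (verit) mult_nonneg_nonneg zero_le_power2)+

lemma lt1: "q * q^j < 1" "s1^2 * (q^j * q^n) < 1" "s1^2 * (q * q^j * q^n) < 1" "s1^2 * q^j < 1"
    "s0^2 * q^j < 1"
  using mult_pow_lt1[of q q j] mult_pow_lt1[of q "s1^2" "j+n"] mult_pow_lt1[of q "s1^2" "Suc (j+n)"]
    mult_pow_lt1[of q "s1^2" j] mult_pow_lt1[of q "s0^2" j] q0 q1 s1l s0l
  by (auto simp: power_add mult.assoc)

lemma nz1: "1 - q * q^j \<noteq> 0" "1 - s1^2 * (q^j * q^n) \<noteq> 0" "1 - s1^2 * (q * q^j * q^n) \<noteq> 0"
  "1 - s1^2 * q^j \<noteq> 0" "1 - s0^2 * q^j \<noteq> 0"
  using lt1(1)[of j] lt1(2)[of j n] lt1(3)[of j n] lt1(4)[of j] lt1(5)[of j] by auto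

lemma nz2: "q * q^j \<noteq> 1" "s1^2 * (q^j * q^n) \<noteq> 1" "s1^2 * (q * q^j * q^n) \<noteq> 1"
  "s1^2 * q^j \<noteq> 1" "s0^2 * q^j \<noteq> 1"
  using lt1(1)[of j] lt1(2)[of j n] lt1(3)[of j n] lt1(4)[of j] lt1(5)[of j] by auto

lemma PW0:
  assumes m0: "0 \<le> m"
  shows "Pr \<beta> s0 s1 (q^nat m) False False * ph k m + Pr \<beta> s0 s1 (q^nat m) True False * ph k (m+1)
       = Pr \<beta> s1 s0 (q^nat k) False False * ph k m + Pr \<beta> s1 s0 (q^nat (k-1)) True False * ph (k-1) m"
proof -
  consider "k < 0" | "k = 0" | "1 \<le> k \<and> k \<le> m" | "k = m + 1" | "k > m + 1" by linarith
  then show ?thesis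
  proof cases
    case 1 then show ?thesis by (simp add: ph_def)
  next
    case 2
    define n where "n = nat m"
    have m: "m = int n" using m0 n_def by simp
    have g1: "phi q (s1^2/s0^2) (s1^2) 0 (Suc n) = phi q (s1^2/s0^2) (s1^2) 0 n *
       ((1 - s1^2/s0^2 * q^n) * (1 - q * q^n) / ((1 - s1^2 * q^n) * (1 - q * q^n)))"
      using RB[of q "s1^2" "s1^2/s0^2" 0 n] q0 q1 s1l by simp
    have "Pr \<beta> s0 s1 (q^n) False False * phi q (s1^2/s0^2) (s1^2) 0 n
        + Pr \<beta> s0 s1 (q^n) True False * phi q (s1^2/s0^2) (s1^2) 0 (Suc n)
        = Pr \<beta> s1 s0 1 False False * phi q (s1^2/s0^2) (s1^2) 0 n"
      by (rule core0_zero[OF s0nz nzs _ _ g1]) (simp_all add: nz1 nz2)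
    then show ?thesis using 2 by (simp add: ph_def m nat_add_distrib)
  next
    case 3
    define j where "j = nat (k - 1)"
    define n where "n = nat (m - k)"
    have k: "k = int j + 1" and m: "m = int j + 1 + int n" using 3 j_def n_def by auto
    let ?f = "phi q (s1^2/s0^2) (s1^2)"
    have f1: "?f (Suc j) (Suc (j + n)) = ?f j (j + n) * ((s1^2/s0^2 - s1^2 * q^j) * (1 - q * q^j * q^n) / ((1 - s1^2 * (q^j * q^n)) * (1 - q * q^j)))"
      using RA[of q "s1^2"] q0 q1 s1l by simp
    have f3: "?f j (Suc (j + n)) = ?f j (j + n) * ((1 - s1^2/s0^2 * q^n) * (1 - q * q^j * q^n) / ((1 - s1^2 * (q^j * q^n)) * (1 - q * q^n)))"
      using RB[of q "s1^2"] q0 q1 s1l by simp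
    have f2: "?f (Suc j) (Suc (Suc (j + n))) = ?f (Suc j) (Suc (j + n)) * ((1 - s1^2/s0^2 * q^n) * (1 - q * (q * q^j) * q^n) / ((1 - s1^2 * (q * q^j * q^n)) * (1 - q * q^n)))"
      using RB[of q "s1^2" _ "Suc j" n] q0 q1 s1l by simp
    have "Pr \<beta> s0 s1 (q * q^j * q^n) False False * ?f (Suc j) (Suc (j + n)) + Pr \<beta> s0 s1 (q * q^j * q^n) True False * ?f (Suc j) (Suc (Suc (j + n)))
       = Pr \<beta> s1 s0 (q * q^j) False False * ?f (Suc j) (Suc (j + n)) + Pr \<beta> s1 s0 (q^j) True False * ?f j (Suc (j + n))"
      by (rule core0_int[OF s0nz nzs _ _ _ _ f1 f3 f2]) (simp_all add: nz1 nz2)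
    moreover have "nat m = Suc (j + n)" "nat k = Suc j" "nat (m + 1) = Suc (Suc (j + n))" "nat (k - 1) = j"
      using k m by auto
    ultimately show ?thesis using 3 k m by (simp add: ph_def power_add mult.assoc)
  next
    case 4
    define n where "n = nat m"
    have m: "m = int n" using m0 n_def by simp
    have h1: "phi q (s1^2/s0^2) (s1^2) (Suc n) (Suc n) = phi q (s1^2/s0^2) (s1^2) n n *
       ((s1^2/s0^2 - s1^2 * q^n) * (1 - q * q^n) / ((1 - s1^2 * q^n) * (1 - q * q^n)))"
      using RA[of q "s1^2" "s1^2/s0^2" n 0] q0 q1 s1l by simp
    have "Pr \<beta> s0 s1 (q^n) True False * phi q (s1^2/s0^2) (s1^2) (Suc n) (Suc n)
        = phi q (s1^2/s0^2) (s1^2) n n * Pr \<beta> s1 s0 (q^n) True False"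
      by (rule core0_top[OF s0nz nzs _ _ h1]) (simp_all add: nz1 nz2)
    moreover have "nat (m + 1) = Suc n" using m by simp
    ultimately show ?thesis using 4 m by (simp add: ph_def mult.commute)
  next
    case 5 then show ?thesis by (simp add: ph_def)
  qed
qed

lemma PW1:
  assumes m0: "0 \<le> m"
  shows "Pr \<beta> s0 s1 (q^nat m) False True * ph (k-1) (m-1) + Pr \<beta> s0 s1 (q^nat m) True True * ph (k-1) m
       = Pr \<beta> s1 s0 (q^nat k) False True * ph k m + Pr \<beta> s1 s0 (q^nat (k-1)) True True * ph (k-1) m"
proof -
  consider "k < 0" | "k = 0" | "1 \<le> k \<and> k \<le> m" | "k = m + 1" | "k > m + 1" by linarith
  then show ?thesis
  proof cases
    case 1 then show ?thesis by (simp add: ph_def)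
  next
    case 2 then show ?thesis by (simp add: ph_def Pr_def)
  next
    case 3
    define j where "j = nat (k - 1)"
    define n where "n = nat (m - k)"
    have k: "k = int j + 1" and m: "m = int j + 1 + int n" using 3 j_def n_def by auto
    let ?f = "phi q (s1^2/s0^2) (s1^2)"
    have f1: "?f (Suc j) (Suc (j + n)) = ?f j (j + n) * ((s1^2/s0^2 - s1^2 * q^j) * (1 - q * q^j * q^n) / ((1 - s1^2 * (q^j * q^n)) * (1 - q * q^j)))"
      using RA[of q "s1^2"] q0 q1 s1l by simp
    have f3: "?f j (Suc (j + n)) = ?f j (j + n) * ((1 - s1^2/s0^2 * q^n) * (1 - q * q^j * q^n) / ((1 - s1^2 * (q^j * q^n)) * (1 - q * q^n)))"
      using RB[of q "s1^2"] q0 q1 s1l by simp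
    have "Pr \<beta> s0 s1 (q * q^j * q^n) False True * ?f j (j + n) + Pr \<beta> s0 s1 (q * q^j * q^n) True True * ?f j (Suc (j + n))
       = Pr \<beta> s1 s0 (q * q^j) False True * ?f (Suc j) (Suc (j + n)) + Pr \<beta> s1 s0 (q^j) True True * ?f j (Suc (j + n))"
      by (rule core1_int[OF s0nz nzs _ _ _ f1 f3]) (simp_all add: nz1 nz2)
    moreover have "nat m = Suc (j + n)" "nat k = Suc j" "nat (m - 1) = j + n" "nat (k - 1) = j"
      using k m by auto
    ultimately show ?thesis using 3 k m by (simp add: ph_def power_add mult.assoc)
  next
    case 4
    then show ?thesis using core1_top[OF nzs, of "q ^ nat m" "ph m m"] by (simp add: ph_def)
  next
    case 5 then show ?thesis by (simp add: ph_def)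
  qed
qed

lemma ph_out: "k < 0 \<or> k > M \<Longrightarrow> ph k M = 0"
  by (auto simp: ph_def)

lemma Intw:
  fixes g0 g1 :: "int \<Rightarrow> real"
  assumes m0: "0 \<le> m"
  shows "Pr \<beta> s0 s1 (q^nat m) False False * (\<Sum>k\<in>{0..m}. ph k m * g0 k)
       + Pr \<beta> s0 s1 (q^nat m) False True * (\<Sum>k\<in>{0..m-1}. ph k (m-1) * g1 (k+1))
       + Pr \<beta> s0 s1 (q^nat m) True False * (\<Sum>k\<in>{0..m+1}. ph k (m+1) * g0 k)
       + Pr \<beta> s0 s1 (q^nat m) True True * (\<Sum>k\<in>{0..m}. ph k m * g1 (k+1))
     = (\<Sum>k\<in>{0..m}. ph k m * (Pr \<beta> s1 s0 (q^nat k) False False * g0 k + Pr \<beta> s1 s0 (q^nat k) False True * g1 k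
            + Pr \<beta> s1 s0 (q^nat k) True False * g0 (k+1) + Pr \<beta> s1 s0 (q^nat k) True True * g1 (k+1)))"
proof -
  let ?N = "m + 1"
  have a1: "(\<Sum>k\<in>{0..m}. ph k m * g0 k) = (\<Sum>k\<in>{0..?N}. ph k m * g0 k)"
    using shift_sum[of 0 m ?N "\<lambda>k. ph k m * g0 k"] by (simp add: ph_out)
  have a2: "(\<Sum>k\<in>{0..m-1}. ph k (m-1) * g1 (k+1)) = (\<Sum>k\<in>{0..?N}. ph (k-1) (m-1) * g1 k)"
    using shift_sum[of 1 "m-1" ?N "\<lambda>k. ph k (m-1) * g1 (k+1)"] by (simp add: ph_out)
  have a3: "(\<Sum>k\<in>{0..m+1}. ph k (m+1) * g0 k) = (\<Sum>k\<in>{0..?N}. ph k (m+1) * g0 k)"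
    by simp
  have a4: "(\<Sum>k\<in>{0..m}. ph k m * g1 (k+1)) = (\<Sum>k\<in>{0..?N}. ph (k-1) m * g1 k)"
    using shift_sum[of 1 m ?N "\<lambda>k. ph k m * g1 (k+1)"] by (simp add: ph_out)
  have b1: "(\<Sum>k\<in>{0..m}. ph k m * Pr \<beta> s1 s0 (q^nat k) False False * g0 k) = (\<Sum>k\<in>{0..?N}. ph k m * Pr \<beta> s1 s0 (q^nat k) False False * g0 k)"
    using shift_sum[of 0 m ?N "\<lambda>k. ph k m * Pr \<beta> s1 s0 (q^nat k) False False * g0 k"] by (simp add: ph_out)
  have b2: "(\<Sum>k\<in>{0..m}. ph k m * Pr \<beta> s1 s0 (q^nat k) False True * g1 k) = (\<Sum>k\<in>{0..?N}. ph k m * Pr \<beta> s1 s0 (q^nat k) False True * g1 k)"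
    using shift_sum[of 0 m ?N "\<lambda>k. ph k m * Pr \<beta> s1 s0 (q^nat k) False True * g1 k"] by (simp add: ph_out)
  have b3: "(\<Sum>k\<in>{0..m}. ph k m * Pr \<beta> s1 s0 (q^nat k) True False * g0 (k+1)) = (\<Sum>k\<in>{0..?N}. ph (k-1) m * Pr \<beta> s1 s0 (q^nat (k-1)) True False * g0 k)"
    using shift_sum[of 1 m ?N "\<lambda>k. ph k m * Pr \<beta> s1 s0 (q^nat k) True False * g0 (k+1)"] by (simp add: ph_out)
  have b4: "(\<Sum>k\<in>{0..m}. ph k m * Pr \<beta> s1 s0 (q^nat k) True True * g1 (k+1)) = (\<Sum>k\<in>{0..?N}. ph (k-1) m * Pr \<beta> s1 s0 (q^nat (k-1)) True True * g1 k)"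
    using shift_sum[of 1 m ?N "\<lambda>k. ph k m * Pr \<beta> s1 s0 (q^nat k) True True * g1 (k+1)"] by (simp add: ph_out)
  have pw: "Pr \<beta> s0 s1 (q^nat m) False False * (ph k m * g0 k) + Pr \<beta> s0 s1 (q^nat m) False True * (ph (k-1) (m-1) * g1 k)
     + Pr \<beta> s0 s1 (q^nat m) True False * (ph k (m+1) * g0 k) + Pr \<beta> s0 s1 (q^nat m) True True * (ph (k-1) m * g1 k)
     = ph k m * Pr \<beta> s1 s0 (q^nat k) False False * g0 k + ph k m * Pr \<beta> s1 s0 (q^nat k) False True * g1 k
     + ph (k-1) m * Pr \<beta> s1 s0 (q^nat (k-1)) True False * g0 k + ph (k-1) m * Pr \<beta> s1 s0 (q^nat (k-1)) True True * g1 k" for k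
  proof -
    have "(Pr \<beta> s0 s1 (q^nat m) False False * ph k m + Pr \<beta> s0 s1 (q^nat m) True False * ph k (m+1)) * g0 k
       + (Pr \<beta> s0 s1 (q^nat m) False True * ph (k-1) (m-1) + Pr \<beta> s0 s1 (q^nat m) True True * ph (k-1) m) * g1 k
     = (Pr \<beta> s1 s0 (q^nat k) False False * ph k m + Pr \<beta> s1 s0 (q^nat (k-1)) True False * ph (k-1) m) * g0 k
     + (Pr \<beta> s1 s0 (q^nat k) False True * ph k m + Pr \<beta> s1 s0 (q^nat (k-1)) True True * ph (k-1) m) * g1 k"
      using PW0[OF m0, of k] PW1[OF m0, of k] by simp
    then show ?thesis by (simp add: algebra_simps)
  qed
  have "LHS": "Pr \<beta> s0 s1 (q^nat m) False False * (\<Sum>k\<in>{0..m}. ph k m * g0 k)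
       + Pr \<beta> s0 s1 (q^nat m) False True * (\<Sum>k\<in>{0..m-1}. ph k (m-1) * g1 (k+1))
       + Pr \<beta> s0 s1 (q^nat m) True False * (\<Sum>k\<in>{0..m+1}. ph k (m+1) * g0 k)
       + Pr \<beta> s0 s1 (q^nat m) True True * (\<Sum>k\<in>{0..m}. ph k m * g1 (k+1))
     = (\<Sum>k\<in>{0..?N}. Pr \<beta> s0 s1 (q^nat m) False False * (ph k m * g0 k) + Pr \<beta> s0 s1 (q^nat m) False True * (ph (k-1) (m-1) * g1 k)
     + Pr \<beta> s0 s1 (q^nat m) True False * (ph k (m+1) * g0 k) + Pr \<beta> s0 s1 (q^nat m) True True * (ph (k-1) m * g1 k))"
    unfolding a1 a2 a4 by (simp add: sum.distrib sum_distrib_left)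
  have "RHS": "(\<Sum>k\<in>{0..m}. ph k m * (Pr \<beta> s1 s0 (q^nat k) False False * g0 k + Pr \<beta> s1 s0 (q^nat k) False True * g1 k
            + Pr \<beta> s1 s0 (q^nat k) True False * g0 (k+1) + Pr \<beta> s1 s0 (q^nat k) True True * g1 (k+1)))
     = (\<Sum>k\<in>{0..?N}. ph k m * Pr \<beta> s1 s0 (q^nat k) False False * g0 k + ph k m * Pr \<beta> s1 s0 (q^nat k) False True * g1 k
     + ph (k-1) m * Pr \<beta> s1 s0 (q^nat (k-1)) True False * g0 k + ph (k-1) m * Pr \<beta> s1 s0 (q^nat (k-1)) True True * g1 k)"
  proof -
    have "(\<Sum>k\<in>{0..m}. ph k m * (Pr \<beta> s1 s0 (q^nat k) False False * g0 k + Pr \<beta> s1 s0 (q^nat k) False True * g1 k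
            + Pr \<beta> s1 s0 (q^nat k) True False * g0 (k+1) + Pr \<beta> s1 s0 (q^nat k) True True * g1 (k+1)))
      = (\<Sum>k\<in>{0..m}. ph k m * Pr \<beta> s1 s0 (q^nat k) False False * g0 k) + (\<Sum>k\<in>{0..m}. ph k m * Pr \<beta> s1 s0 (q^nat k) False True * g1 k)
        + (\<Sum>k\<in>{0..m}. ph k m * Pr \<beta> s1 s0 (q^nat k) True False * g0 (k+1)) + (\<Sum>k\<in>{0..m}. ph k m * Pr \<beta> s1 s0 (q^nat k) True True * g1 (k+1))"
      by (simp add: sum.distrib algebra_simps)
    then show ?thesis unfolding b1 b2 b3 b4 by (simp add: sum.distrib)
  qed
  show ?thesis unfolding LHS RHS using pw by simp
qed

lemma Z_eq:
  assumes m0: "0 \<le> m"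
  shows "Pr \<beta> s0 s1 (q^nat m) False False * (\<Sum>k\<in>{0..m}. ph k m)
       + Pr \<beta> s0 s1 (q^nat m) False True * (\<Sum>k\<in>{0..m-1}. ph k (m-1))
       + Pr \<beta> s0 s1 (q^nat m) True False * (\<Sum>k\<in>{0..m+1}. ph k (m+1))
       + Pr \<beta> s0 s1 (q^nat m) True True * (\<Sum>k\<in>{0..m}. ph k m) = (\<Sum>k\<in>{0..m}. ph k m)"
  using Intw[OF m0, of "\<lambda>_. 1" "\<lambda>_. 1"] Pr_sum[OF nzs(1) nzs(2)] by (simp add: add.assoc)

lemma Norm: "0 \<le> m \<Longrightarrow> (\<Sum>k\<in>{0..m}. ph k m) = 1"
proof -
  have TF: "Pr \<beta> s0 s1 (q^n) True False \<noteq> 0" for n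
  proof -
    have "s1^2 * q^n < 1" using lt1(4) .
    then have "1 - (\<beta> * s1^2 + q^n * s1^2) / (1 + \<beta> * s1^2) = (1 - s1^2 * q^n) / (1 + \<beta> * s1^2)"
      using nzs by (simp add: field_simps)
    moreover have "\<beta> * s0^2 / (1 + \<beta> * s0^2) \<noteq> 0" using bpos s0nz nzs by simp
    moreover have "(1 - s1^2 * q^n) / (1 + \<beta> * s1^2) \<noteq> 0" using nzs \<open>s1^2 * q^n < 1\<close> by simp
    ultimately show ?thesis unfolding Pr_def by simp
  qed
  have "(\<Sum>k\<in>{0..int n}. ph k (int n)) = 1 \<and> (\<Sum>k\<in>{0..int n + 1}. ph k (int n + 1)) = 1" for n
  proof (induction n)
    case 0
    have z0: "(\<Sum>k\<in>{0..0::int}. ph k 0) = 1" by (simp add: ph_def phi_def)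
    have "Pr \<beta> s0 s1 1 False True = 0" by (simp add: Pr_def)
    then have "Pr \<beta> s0 s1 1 False False + Pr \<beta> s0 s1 1 True False * (\<Sum>k\<in>{0..1}. ph k 1)
       + Pr \<beta> s0 s1 1 True True = 1" using Z_eq[of 0] z0 by simp
    moreover have "Pr \<beta> s0 s1 1 False False + Pr \<beta> s0 s1 1 True False + Pr \<beta> s0 s1 1 True True = 1"
      using Pr_sum[OF nzs(2) nzs(1), of 1] \<open>Pr \<beta> s0 s1 1 False True = 0\<close> by simp
    ultimately have "Pr \<beta> s0 s1 1 True False * (\<Sum>k\<in>{0..1}. ph k 1) = Pr \<beta> s0 s1 1 True False"
      by linarith
    then show ?case using TF[of 0] z0 by simp
  next
    case (Suc n)
    have e: "int (Suc n) = int n + 1" by simp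
    have "Pr \<beta> s0 s1 (q^Suc n) False False + Pr \<beta> s0 s1 (q^Suc n) False True
       + Pr \<beta> s0 s1 (q^Suc n) True False * (\<Sum>k\<in>{0..int n + 1 + 1}. ph k (int n + 1 + 1))
       + Pr \<beta> s0 s1 (q^Suc n) True True = 1"
      using Z_eq[of "int n + 1"] Suc.IH by (simp add: nat_add_distrib)
    moreover have "Pr \<beta> s0 s1 (q^Suc n) False False + Pr \<beta> s0 s1 (q^Suc n) False True
       + Pr \<beta> s0 s1 (q^Suc n) True False + Pr \<beta> s0 s1 (q^Suc n) True True = 1"
      using Pr_sum[OF nzs(2) nzs(1)] by simp
    ultimately have "Pr \<beta> s0 s1 (q^Suc n) True False * (\<Sum>k\<in>{0..int n + 1 + 1}. ph k (int n + 1 + 1)) = Pr \<beta> s0 s1 (q^Suc n) True False"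
      by linarith
    then have "(\<Sum>k\<in>{0..int n + 1 + 1}. ph k (int n + 1 + 1)) = 1"
      using TF[of "Suc n"] by simp
    then show ?case using Suc.IH unfolding e by (simp add: add.assoc)
  qed
  then show "0 \<le> m \<Longrightarrow> (\<Sum>k\<in>{0..m}. ph k m) = 1"
    by (metis nonneg_int_cases)
qed

lemma q1': "q \<le> 1" using q1 by simp

lemma main:
  "x2 < x1 \<Longrightarrow> pmf (map_pmf (map snd) (traj \<beta> q s0 s1 T (x1, x2))) p =
     (\<Sum>k\<in>{0..x1-x2-1}. ph k (x1-x2-1) * pmf (map_pmf (map snd) (traj \<beta> q s1 s0 T (x2+1+k, x2))) p)"
proof (induction T arbitrary: x1 x2 p)
  case 0
  have "(\<Sum>k\<in>{0..x1-x2-1}. ph k (x1-x2-1) * c) = c" for c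
    using Norm[of "x1-x2-1"] 0 by (simp add: sum_distrib_right[symmetric])
  then show ?case by simp
next
  case (Suc T)
  define m where "m = x1 - x2 - 1"
  have m0: "0 \<le> m" using Suc.prems m_def by simp
  define G where "G y p' = pmf (map_pmf (map snd) (traj \<beta> q s1 s0 T y)) p'" for y p'
  define F where "F y p' = pmf (map_pmf (map snd) (traj \<beta> q s0 s1 T y)) p'" for y p'
  define g0 where "g0 k p' = G (x2 + 1 + k, x2) p'" for k p'
  define g1 where "g1 k p' = G (x2 + 1 + k, x2 + 1) p'" for k p'
  note stepX = pmf_bind_step[OF q0 q1' bpos s0l s1l]
  note stepY = pmf_bind_step[OF q0 q1' bpos s1l s0l]
  have RHS: "pmf (map_pmf (map snd) (traj \<beta> q s1 s0 (Suc T) (x2+1+k, x2))) (c # p') =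
     (if c = x2 then Pr \<beta> s1 s0 (q^nat k) False False * g0 k p' + Pr \<beta> s1 s0 (q^nat k) False True * g1 k p'
            + Pr \<beta> s1 s0 (q^nat k) True False * g0 (k+1) p' + Pr \<beta> s1 s0 (q^nat k) True True * g1 (k+1) p' else 0)" for k c p'
    unfolding traj_snd stepY by (simp add: pmf_map_Cons g0_def g1_def G_def add_ac)
  show ?case
  proof (cases p)
    case Nil then show ?thesis unfolding Nil traj_snd stepX stepY by (simp add: pmf_map_Cons)
  next
    case (Cons c p')
    show ?thesis
    proof (cases "c = x2")
      case False then show ?thesis unfolding Cons traj_snd stepX stepY by (simp add: pmf_map_Cons)
    next
      case True
      have L: "pmf (map_pmf (map snd) (traj \<beta> q s0 s1 (Suc T) (x1, x2))) (c # p') =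
        Pr \<beta> s0 s1 (q^nat m) False False * F (x1, x2) p' + Pr \<beta> s0 s1 (q^nat m) False True * F (x1, x2 + 1) p'
        + Pr \<beta> s0 s1 (q^nat m) True False * F (x1 + 1, x2) p' + Pr \<beta> s0 s1 (q^nat m) True True * F (x1 + 1, x2 + 1) p'"
        unfolding traj_snd stepX by (simp add: pmf_map_Cons True F_def m_def)
      have i1: "F (x1, x2) p' = (\<Sum>k\<in>{0..m}. ph k m * g0 k p')"
        using Suc.IH[of x2 x1 p'] Suc.prems by (simp add: F_def m_def g0_def G_def)
      have i3: "F (x1 + 1, x2) p' = (\<Sum>k\<in>{0..m+1}. ph k (m+1) * g0 k p')"
        using Suc.IH[of x2 "x1+1" p'] Suc.prems by (simp add: F_def m_def g0_def G_def algebra_simps)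
      have i4: "F (x1 + 1, x2 + 1) p' = (\<Sum>k\<in>{0..m}. ph k m * g1 (k+1) p')"
        using Suc.IH[of "x2+1" "x1+1" p'] Suc.prems by (simp add: F_def m_def g1_def G_def algebra_simps)
      have i2: "Pr \<beta> s0 s1 (q^nat m) False True * F (x1, x2 + 1) p' = Pr \<beta> s0 s1 (q^nat m) False True * (\<Sum>k\<in>{0..m-1}. ph k (m-1) * g1 (k+1) p')"
      proof (cases "m = 0")
        case True then show ?thesis by (simp add: Pr_def)
      next
        case False
        then have "x2 + 1 < x1" using m0 m_def by simp
        then show ?thesis
          using Suc.IH[of "x2+1" x1 p'] by (simp add: F_def m_def g1_def G_def algebra_simps)
      qed
      have R: "(\<Sum>k\<in>{0..x1-x2-1}. ph k (x1-x2-1) * pmf (map_pmf (map snd) (traj \<beta> q s1 s0 (Suc T) (x2+1+k, x2))) p)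
        = (\<Sum>k\<in>{0..m}. ph k m * (Pr \<beta> s1 s0 (q^nat k) False False * g0 k p' + Pr \<beta> s1 s0 (q^nat k) False True * g1 k p'
            + Pr \<beta> s1 s0 (q^nat k) True False * g0 (k+1) p' + Pr \<beta> s1 s0 (q^nat k) True True * g1 (k+1) p'))"
        unfolding Cons RHS using True by (simp add: m_def)
      show ?thesis unfolding R unfolding Cons L i1 i2 i3 i4
        using Intw[OF m0, of "\<lambda>k. g0 k p'" "\<lambda>k. g1 k p'"] by simp
    qed
  qed
qed

lemma final_ctx:
  fixes x10 x20 :: int and init :: "int pmf"
  assumes x: "x10 > x20"
    and init: "\<And>y. pmf init y =
       (if x20 < y \<and> y \<le> x10
        then phi q (s1\<^sup>2 / s0\<^sup>2) (s1\<^sup>2) (nat (y - x20 - 1)) (nat (x10 - x20 - 1))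
        else 0)"
  shows "map_pmf (map snd) (traj \<beta> q s0 s1 T (x10, x20)) =
             map_pmf (map snd) (bind_pmf init (\<lambda>y. traj \<beta> q s1 s0 T (y, x20)))"
proof (rule pmf_eqI)
  fix p
  define m where "m = x10 - x20 - 1"
  let ?G = "\<lambda>y. pmf (map_pmf (map snd) (traj \<beta> q s1 s0 T (y, x20))) p"
  have "pmf (map_pmf (map snd) (bind_pmf init (\<lambda>y. traj \<beta> q s1 s0 T (y, x20)))) p = measure_pmf.expectation init ?G"
    by (simp add: map_bind_pmf pmf_bind)
  also have "\<dots> = (\<Sum>y\<in>{x20+1..x10}. pmf init y * ?G y)"
    by (subst integral_measure_pmf[where A="{x20+1..x10}"]) (auto simp: set_pmf_iff init split: if_splits)
  also have "\<dots> = (\<Sum>k\<in>{0..m}. ph k m * ?G (x20+1+k))"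
    by (rule sum.reindex_bij_witness[where i="\<lambda>k. x20+1+k" and j="\<lambda>y. y - x20 - 1"]) (auto simp: init ph_def m_def)
  also have "\<dots> = pmf (map_pmf (map snd) (traj \<beta> q s0 s1 T (x10, x20))) p"
    using main[of x20 x10 T p] x by (simp add: m_def)
  finally show "pmf (map_pmf (map snd) (traj \<beta> q s0 s1 T (x10, x20))) p =
      pmf (map_pmf (map snd) (bind_pmf init (\<lambda>y. traj \<beta> q s1 s0 T (y, x20)))) p" by simp
qed

end

theorem corollary8p5:
  fixes q \<beta> s0 s1 :: real and x10 x20 :: int and init :: "int pmf"
  assumes "0 \<le> q" "q < 1" "\<beta> > 0"
    and "-1 < s0" "s0 < 0" "-1 < s1" "s1 < 0" "\<bar>s0\<bar> > \<bar>s1\<bar>"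
    and "x10 > x20"
    and init: "\<And>y. pmf init y =
       (if x20 < y \<and> y \<le> x10
        then phi q (s1\<^sup>2 / s0\<^sup>2) (s1\<^sup>2) (nat (y - x20 - 1)) (nat (x10 - x20 - 1))
        else 0)"
  shows "\<forall>T. map_pmf (map snd) (traj \<beta> q s0 s1 T (x10, x20)) =
             map_pmf (map snd) (bind_pmf init (\<lambda>y. traj \<beta> q s1 s0 T (y, x20)))"
proof
  fix T
  have s0nz: "s0 \<noteq> 0" using assms by simp
  have s0l: "s0^2 < 1" using assms by (simp add: abs_square_less_1)
  have s1l: "s1^2 < 1" using assms by (simp add: abs_square_less_1)
  show "map_pmf (map snd) (traj \<beta> q s0 s1 T (x10, x20)) =
             map_pmf (map snd) (bind_pmf init (\<lambda>y. traj \<beta> q s1 s0 T (y, x20)))"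
    by (rule final_ctx[OF assms(1,2,3) s0nz s0l s1l assms(9) init])
qed

end
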